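(* Let $1<p<\infty$, $n\ge 1$, and let $f\in C([0,\infty))$, $g\in C^{0,1}([0,\infty))$ be strictly increasing with $f(0)=g(0)=0$. Let $0<R<\infty$ and let $v=v(r)$ be a solution on $[0,R]$ of $$\operatorname{sign}(v')\big(r^{n-1}|v'|^{p-1}\big)'=r^{n-1}\big(f(v)\pm g(|v'|)\big),\qquad v(0)=v_0>0,\quad v'(0)=0,$$ where the sign $\pm$ is fixed (either $+$ throughout or $-$ throughout). Then for all $r\in(0,R)$: $v(r)>0$, $v'(r)>0$, $v''(r)\ge0$, and $v(r)\le v_0+R\,v'(r)$.
   Context: This ODE is the equation $\Delta_p u=f(u)\pm g(|\nabla u|)$, $\Delta_p u=\operatorname{div}(|\nabla u|^{p-2}\nabla u)$, written for radial functions $u(x)=v(|x|)$. *)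

theory Defs
  imports "HOL-Analysis.Analysis"
begin

text \<open>Radial p-Laplacian flux: r^(n-1) |v'(r)|^(p-2) v'(r).  Its derivative is
  r^(n-1) times the radial p-Laplacian; where v' is nonzero it equals
  sign(v') (r^(n-1) |v'|^(p-1)).\<close>
definition pflux :: "real \<Rightarrow> nat \<Rightarrow> (real \<Rightarrow> real) \<Rightarrow> real \<Rightarrow> real" where
  "pflux p n w r = r ^ (n - 1) * (\<bar>w r\<bar> powr (p - 2) * w r)"

end

theory Submission
  imports Defs
begin

lemma psi_cont:
  fixes a :: real assumes a: "a > -1"
  shows "continuous_on UNIV (\<lambda>x::real. \<bar>x\<bar> powr a * x)"
proof -
  have "isCont (\<lambda>x::real. \<bar>x\<bar> powr a * x) x0" for x0
  proof (cases "x0 = 0")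
    case False
    then show ?thesis by (intro continuous_intros) auto
  next
    case True
    have "((\<lambda>x::real. \<bar>x\<bar> powr (a+1)) \<longlongrightarrow> \<bar>0\<bar> powr (a+1)) (at 0)"
      using a by (intro tendsto_intros) auto
    then have 1: "((\<lambda>x::real. \<bar>x\<bar> powr (a+1)) \<longlongrightarrow> 0) (at 0)" by simp
    have 2: "\<bar>\<bar>x\<bar> powr a * x\<bar> = \<bar>x\<bar> powr (a+1)" for x :: real
    proof (cases "x = 0")
      case False
      then have "\<bar>x\<bar> powr (a+1) = \<bar>x\<bar> powr a * \<bar>x\<bar>" by (simp add: powr_add)
      then show ?thesis by (simp add: abs_mult)
    qed simp
    have "((\<lambda>x::real. \<bar>x\<bar> powr a * x) \<longlongrightarrow> 0) (at 0)"
      by (rule tendsto_rabs_zero_cancel) (use 1 in \<open>simp only: 2\<close>)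
    then show ?thesis using True by (simp add: isCont_def)
  qed
  then show ?thesis by (simp add: continuous_at_imp_continuous_on)
qed

theorem lemma2p2:
  fixes p R v0 s :: real and n :: nat
    and f g v v' :: "real \<Rightarrow> real"
  assumes p: "1 < p"
    and n: "n \<ge> 1"
    and f_cont: "continuous_on {0..} f"
    and f_mono: "strict_mono_on {0..} f"
    and f0: "f 0 = 0"
    and g_lip: "\<exists>L. L-lipschitz_on {0..} g"
    and g_mono: "strict_mono_on {0..} g"
    and g0: "g 0 = 0"
    and R: "0 < R"
    and s: "s = 1 \<or> s = -1"
    and v_deriv: "\<And>r. r \<in> {0..R} \<Longrightarrow> (v has_real_derivative v' r) (at r within {0..R})"
    and v'_cont: "continuous_on {0..R} v'"
    and ode: "\<And>r. r \<in> {0<..<R} \<Longrightarrow>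
        (pflux p n v' has_real_derivative r ^ (n - 1) * (f (v r) + s * g \<bar>v' r\<bar>)) (at r)"
    and v0: "v 0 = v0" "v0 > 0"
    and v'0: "v' 0 = 0"
  shows "\<forall>r \<in> {0<..<R}. v r > 0 \<and> v' r > 0
           \<and> (\<exists>d. (v' has_real_derivative d) (at r) \<and> d \<ge> 0)
           \<and> v r \<le> v0 + R * v' r"
proof -
  obtain m where nm: "n = Suc m" using n by (cases n) auto
  have nm1: "n - 1 = m" using nm by simp
  define Phi where "Phi = pflux p n v'"
  define k where "k = (\<lambda>t. f (v t) + s * g \<bar>v' t\<bar>)"
  have Phi_eq: "Phi t = t ^ m * (\<bar>v' t\<bar> powr (p - 2) * v' t)" for t
    unfolding Phi_def pflux_def nm1 ..
  have ode': "(Phi has_real_derivative t ^ m * k t) (at t)" if "t \<in> {0<..<R}" for t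
    using ode[OF that] unfolding Phi_def k_def nm1 .
  obtain L where L: "L-lipschitz_on {0..} g" using g_lip by blast
  have L0: "L \<ge> 0" using L by (simp add: lipschitz_on_def)
  have g_cont: "continuous_on {0..} g" using L by (rule lipschitz_on_continuous_on)
  have vder: "(v has_real_derivative v' r) (at r)" if "r \<in> {0<..<R}" for r
  proof -
    have "at r within {0..R} = at r" using that by (intro at_within_interior) auto
    then show ?thesis using v_deriv[of r] that by auto
  qed
  have v_cont: "continuous_on {0..R} v" by (rule DERIV_continuous_on[OF v_deriv])
  have Phi_cont: "continuous_on {0..R} Phi"
  proof -
    have psi: "continuous_on {0..R} (\<lambda>t. \<bar>v' t\<bar> powr (p - 2) * v' t)"
      using continuous_on_compose2[OF psi_cont[of "p-2"] v'_cont] p by auto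
    then show ?thesis unfolding Phi_eq[abs_def] by (intro continuous_on_mult[OF _ psi] continuous_intros)
  qed
  have Phi0: "Phi 0 = 0" unfolding Phi_eq v'0 by simp
  have sgn_pos: "Phi t > 0 \<longleftrightarrow> v' t > 0" if "t > 0" for t
  proof -
    have "\<bar>v' t\<bar> powr (p - 2) * v' t > 0 \<longleftrightarrow> v' t > 0"
      by (cases "v' t = 0") (auto simp: zero_less_mult_iff)
    then show ?thesis unfolding Phi_eq using that by (simp add: zero_less_mult_iff)
  qed
  have f_pos: "f y > 0" if "y > 0" for y
    using strict_mono_onD[OF f_mono, of 0 y] that f0 by auto
  have g_pos: "g y > 0" if "y > 0" for y
    using strict_mono_onD[OF g_mono, of 0 y] that g0 by auto
  have f_le: "f y \<le> f z" if "0 \<le> y" "y \<le> z" for y z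
    using strict_mono_onD[OF f_mono, of y z] that by (cases "y = z") auto
  have g_le: "g y \<le> g z" if "0 \<le> y" "y \<le> z" for y z
    using strict_mono_onD[OF g_mono, of y z] that by (cases "y = z") auto
  have f_isCont: "isCont f y" if "y > 0" for y
    using continuous_on_interior[OF f_cont, of y] that by simp
  have gv'_cont: "continuous_on {0..R} (\<lambda>t. g \<bar>v' t\<bar>)"
    by (rule continuous_on_compose2[OF g_cont]) (auto intro: continuous_intros v'_cont)
  have v_ge: "v a \<le> v b" if "0 \<le> a" "a \<le> b" "b \<le> R" "\<And>t. a < t \<Longrightarrow> t < b \<Longrightarrow> v' t \<ge> 0" for a b
  proof (rule DERIV_nonneg_imp_increasing_open[OF that(2)])
    fix x assume "a < x" "x < b"
    then show "\<exists>y. (v has_real_derivative y) (at x) \<and> 0 \<le> y"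
      using vder[of x] that by auto
  next
    show "continuous_on {a..b} v" using that by (auto intro: continuous_on_subset[OF v_cont])
  qed
  have v_gt: "v a < v b" if "0 \<le> a" "a < b" "b \<le> R" "\<And>t. a < t \<Longrightarrow> t < b \<Longrightarrow> v' t > 0" for a b
  proof (rule DERIV_pos_imp_increasing_open[OF that(2)])
    fix x assume "a < x" "x < b"
    then show "\<exists>y. (v has_real_derivative y) (at x) \<and> y > 0"
      using vder[of x] that by auto
  next
    show "continuous_on {a..b} v" using that by (auto intro: continuous_on_subset[OF v_cont])
  qed
  obtain \<delta> where \<delta>: "\<delta> > 0" "\<delta> \<le> R" "\<And>t. t \<in> {0<..<\<delta>} \<Longrightarrow> k t > 0"
  proof -
    have "(v \<longlongrightarrow> v 0) (at 0 within {0..R})"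
      using v_cont R unfolding continuous_on_def by auto
    then have 1: "((\<lambda>t. f (v t)) \<longlongrightarrow> f v0) (at 0 within {0..R})"
      using isCont_tendsto_compose[OF f_isCont[OF v0(2)]] v0(1) by auto
    have "((\<lambda>t. g \<bar>v' t\<bar>) \<longlongrightarrow> g \<bar>v' 0\<bar>) (at 0 within {0..R})"
      using gv'_cont R unfolding continuous_on_def by auto
    then have 2: "((\<lambda>t. g \<bar>v' t\<bar>) \<longlongrightarrow> 0) (at 0 within {0..R})"
      using v'0 g0 by simp
    have "(k \<longlongrightarrow> f v0 + s * 0) (at 0 within {0..R})"
      unfolding k_def by (intro tendsto_intros 1 2)
    then have "eventually (\<lambda>t. k t > 0) (at 0 within {0..R})"
      using f_pos[OF v0(2)] by (intro order_tendstoD(1)) auto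
    then obtain d where d: "d > 0" "\<And>x. x \<in> {0..R} \<Longrightarrow> x \<noteq> 0 \<Longrightarrow> dist x 0 < d \<Longrightarrow> k x > 0"
      unfolding eventually_at by auto
    show ?thesis
      by (rule that[of "min d R"]) (use d R in auto)
  qed
  have v'_small: "v' t > 0" if "t \<in> {0<..<\<delta>}" for t
  proof -
    have "Phi 0 < Phi t"
    proof (rule DERIV_pos_imp_increasing_open[of 0 t Phi])
      show "0 < t" using that by simp
    next
      fix x assume x: "0 < x" "x < t"
      then have "x \<in> {0<..<R}" "x \<in> {0<..<\<delta>}" using that \<delta> by auto
      then show "\<exists>y. (Phi has_real_derivative y) (at x) \<and> y > 0"
        using ode' \<delta>(3) x by (intro exI[of _ "x ^ m * k x"]) auto
    next
      show "continuous_on {0..t} Phi" using that \<delta> by (auto intro: continuous_on_subset[OF Phi_cont])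
    qed
    then show ?thesis using sgn_pos[of t] that Phi0 by auto
  qed
  have v'_pos: "v' b > 0" if b: "b \<in> {0<..<R}" for b
  proof (rule ccontr)
    assume nb: "\<not> v' b > 0"
    then have b\<delta>: "\<delta> \<le> b" using v'_small[of b] b by force
    define Z where "Z = {\<delta>/2..b} \<inter> v' -` {..0}"
    have "closed Z" unfolding Z_def
      by (rule continuous_closed_preimage) (use b \<delta> in \<open>auto intro: continuous_on_subset[OF v'_cont]\<close>)
    moreover have "b \<in> Z" unfolding Z_def using nb b\<delta> \<delta> by auto
    moreover have "bdd_below Z" unfolding Z_def by auto
    ultimately have cZ: "Inf Z \<in> Z" by (intro closed_contains_Inf) auto
    define c where "c = Inf Z"
    have cb: "c \<le> b" unfolding c_def using \<open>b \<in> Z\<close> \<open>bdd_below Z\<close> by (rule cInf_lower)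
    have c0: "c \<ge> \<delta>/2" "v' c \<le> 0" using cZ unfolding Z_def c_def by auto
    have pos_before: "v' r > 0" if "0 < r" "r < c" for r
    proof (cases "r < \<delta>")
      case True then show ?thesis using v'_small that by auto
    next
      case False
      show ?thesis
      proof (rule ccontr)
        assume "\<not> v' r > 0"
        then have "r \<in> Z" unfolding Z_def using False that cb \<delta> by auto
        then have "c \<le> r" unfolding c_def using \<open>bdd_below Z\<close> by (rule cInf_lower)
        then show False using that by simp
      qed
    qed
    have cpos: "c > 0" using c0 \<delta> by simp
    have cR: "c \<in> {0<..<R}" using cpos cb b by auto
    have "isCont v' c" using continuous_on_interior[OF v'_cont, of c] cR by simp
    then have "(v' \<longlongrightarrow> v' c) (at_left c)"
      unfolding isCont_def by (rule tendsto_mono[OF at_le, rotated]) simp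
    moreover have "eventually (\<lambda>r. 0 \<le> v' r) (at_left c)"
      using eventually_at_left_real[OF cpos]
      by (rule eventually_mono) (use pos_before in \<open>auto intro: less_imp_le\<close>)
    ultimately have "0 \<le> v' c"
      by (rule tendsto_lowerbound) (simp add: trivial_limit_at_left_real)
    then have v'c: "v' c = 0" using c0 by simp
    have "v0 \<le> v c" using v_ge[of 0 c] pos_before cR v0 by (auto intro: less_imp_le)
    then have "k c > 0" unfolding k_def v'c using v0 f_pos[of "v c"] g0 by simp
    then have "c ^ m * k c > 0" using cpos by simp
    from DERIV_pos_inc_left[OF ode'[OF cR] this] obtain d where
      d: "d > 0" "\<And>h. h > 0 \<Longrightarrow> h < d \<Longrightarrow> Phi (c - h) < Phi c" by auto
    define h where "h = min (d/2) (c/2)"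
    have h: "h > 0" "h < d" "h < c" unfolding h_def using d cpos by auto
    have "Phi (c - h) < 0" using d(2)[OF h(1,2)] Phi_eq v'c by simp
    moreover have "Phi (c - h) > 0" using sgn_pos[of "c - h"] pos_before[of "c - h"] h by auto
    ultimately show False by simp
  qed
  have v_pos: "v t > 0" "v t \<ge> v0" if "t \<in> {0<..<R}" for t
  proof -
    have "v 0 \<le> v t" using that
    proof (intro v_ge)
      fix x assume "0 < x" "x < t" then show "0 \<le> v' x" using that v'_pos[of x] by auto
    qed auto
    then show "v t > 0" "v t \<ge> v0" using v0 by auto
  qed
  define W where "W = (\<lambda>t. v' t powr (p - 1))"
  define D where "D = (\<lambda>t. k t - real m * W t / t)"
  define E where "E = (\<lambda>t. (1 / (p - 1)) * W t powr (1 / (p - 1) - of_nat 1) * D t)"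
  have W_pos: "W t > 0" if "t \<in> {0<..<R}" for t
    using v'_pos[OF that] unfolding W_def by simp
  have Phi_W: "Phi t = t ^ m * W t" if "t \<in> {0<..<R}" for t
  proof -
    have a: "\<bar>v' t\<bar> = v' t" using v'_pos[OF that] by simp
    have "\<bar>v' t\<bar> powr (p - 2) * v' t = v' t powr (p - 2) * v' t powr 1" unfolding a using v'_pos[OF that] by simp
    also have "\<dots> = v' t powr (p - 2 + 1)" by (rule powr_add[symmetric])
    also have "\<dots> = v' t powr (p - 1)" by simp
    finally show ?thesis unfolding Phi_eq W_def by simp
  qed
  have W_der: "(W has_real_derivative D t) (at t)" if t: "t \<in> {0<..<R}" for t
  proof -
    have tpos: "t > 0" using t by simp
    have 1: "((\<lambda>x. Phi x / x ^ m) has_real_derivative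
        (t ^ m * k t * t ^ m - Phi t * (real m * t ^ (m - Suc 0))) / (t ^ m * t ^ m)) (at t)"
      by (rule DERIV_divide[OF ode'[OF t] DERIV_pow]) (use tpos in simp)
    have 2: "(t ^ m * k t * t ^ m - Phi t * (real m * t ^ (m - Suc 0))) / (t ^ m * t ^ m) = D t"
    proof (cases m)
      case 0 then show ?thesis unfolding D_def by simp
    next
      case (Suc j)
      have "t ^ m = t * t ^ j" using Suc by simp
      then show ?thesis unfolding D_def Phi_W[OF t] using tpos Suc by (simp add: field_simps)
    qed
    show ?thesis
      by (rule has_field_derivative_transform_within_open[OF 1[unfolded 2], of "{0<..<R}"])
         (use t Phi_W in auto)
  qed
  have v'_eq: "v' t = W t powr (1 / (p - 1))" if "t \<in> {0<..<R}" for t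
    using v'_pos[OF that] p unfolding W_def by (simp add: powr_powr)
  have v'_der: "(v' has_real_derivative E t) (at t)" if t: "t \<in> {0<..<R}" for t
    unfolding E_def
    by (rule has_field_derivative_transform_within_open[OF DERIV_fun_powr[OF W_der[OF t] W_pos[OF t]], of "{0<..<R}"])
       (use t v'_eq in auto)
  have D_isCont: "isCont D t" if t: "t \<in> {0<..<R}" for t
  proof -
    have "isCont (\<lambda>x. f (v x)) t"
      by (rule continuous_at_compose[unfolded o_def, OF DERIV_isCont[OF vder[OF t]] f_isCont[OF v_pos(1)[OF t]]])
    moreover have "isCont (\<lambda>x. g \<bar>v' x\<bar>) t"
      using continuous_on_interior[OF gv'_cont, of t] t by simp
    moreover have "isCont W t" by (rule DERIV_isCont[OF W_der[OF t]])
    ultimately show ?thesis unfolding D_def k_def using t by (intro continuous_intros) auto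
  qed
  have D_cont: "continuous_on S D" if "S \<subseteq> {0<..<R}" for S
    using D_isCont that by (intro continuous_at_imp_continuous_on) auto
  have W_cont: "continuous_on S W" if "S \<subseteq> {0<..<R}" for S
  proof (intro continuous_at_imp_continuous_on ballI)
    fix x assume "x \<in> S" then show "isCont W x" using that by (intro DERIV_isCont[OF W_der]) auto
  qed
  have W_dec: "W b \<le> W a" if "0 < a" "a \<le> b" "b < R" "\<And>x. a < x \<Longrightarrow> x < b \<Longrightarrow> D x \<le> 0" for a b
  proof (rule DERIV_nonpos_imp_decreasing_open[of a b W])
    show "a \<le> b" by (rule that(2))
  next
    fix x assume x: "a < x" "x < b"
    then have xR: "x \<in> {0<..<R}" using that by auto
    show "\<exists>y. (W has_real_derivative y) (at x) \<and> y \<le> 0" using W_der[OF xR] that(4)[OF x] by blast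
  next
    show "continuous_on {a..b} W" using that by (intro W_cont) auto
  qed
  have W_sdec: "W b < W a" if "0 < a" "a < b" "b < R" "\<And>x. a < x \<Longrightarrow> x < b \<Longrightarrow> D x < 0" for a b
  proof (rule DERIV_neg_imp_decreasing_open[of a b W])
    show "a < b" by (rule that(2))
  next
    fix x assume x: "a < x" "x < b"
    then have xR: "x \<in> {0<..<R}" using that by auto
    show "\<exists>y. (W has_real_derivative y) (at x) \<and> y < 0" using W_der[OF xR] that(4)[OF x] by blast
  next
    show "continuous_on {a..b} W" using that by (intro W_cont) auto
  qed
  have v'_W_le: "v' a \<le> v' b" if "a \<in> {0<..<R}" "b \<in> {0<..<R}" "W a \<le> W b" for a b
    unfolding v'_eq[OF that(1)] v'_eq[OF that(2)] using that W_pos[OF that(1)] p by (intro powr_mono2) auto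
  have v'_W_less: "v' a < v' b" if "a \<in> {0<..<R}" "b \<in> {0<..<R}" "W a < W b" for a b
    unfolding v'_eq[OF that(1)] v'_eq[OF that(2)] using that W_pos[OF that(1)] p
    by (intro powr_less_mono2) auto
  have k_eq: "k x = f (v x) + s * g (v' x)" if "x \<in> {0<..<R}" for x
    unfolding k_def using v'_pos[OF that] by simp
  have D_nonneg: "D t \<ge> 0" if t: "t \<in> {0<..<R}" for t
  proof (rule ccontr)
    assume "\<not> D t \<ge> 0"
    then have Dt: "D t < 0" by simp
    show False
    proof (cases "\<exists>a\<in>{0<..<t}. D a \<ge> 0")
      case False
      have gt: "v' t < v' x" if x: "x \<in> {0<..<t}" for x
      proof -
        have "W t < W x" using x t
        proof (intro W_sdec)
          fix y assume "x < y" "y < t"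
          then have "y \<in> {0<..<t}" using x by auto
          then show "D y < 0" using False not_le by blast
        qed auto
        then show ?thesis using x t by (intro v'_W_less) auto
      qed
      have "(v' \<longlongrightarrow> v' 0) (at 0 within {0..R})"
        using v'_cont R unfolding continuous_on_def by auto
      then have "(v' \<longlongrightarrow> v' 0) (at_right 0)" using at_within_Icc_at_right[OF R] by simp
      moreover have "eventually (\<lambda>x. v' t \<le> v' x) (at_right 0)"
        using eventually_at_right_real[of 0 t] t
        by (auto elim!: eventually_mono intro: less_imp_le[OF gt])
      ultimately have "v' t \<le> v' 0"
        by (rule tendsto_lowerbound) (simp add: trivial_limit_at_right_real)
      then show False using v'_pos[OF t] v'0 by simp
    next
      case True
      then obtain a where a: "a \<in> {0<..<t}" "D a \<ge> 0" by blast
      define A where "A = {a..t} \<inter> D -` {0..}"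
      have "closed A" unfolding A_def
        by (rule continuous_closed_preimage) (use a t in \<open>auto intro: D_cont\<close>)
      moreover have "a \<in> A" unfolding A_def using a by auto
      moreover have bA: "bdd_above A" unfolding A_def by auto
      ultimately have "Sup A \<in> A" by (intro closed_contains_Sup) auto
      define r1 where "r1 = Sup A"
      have r1A: "r1 \<in> A" using \<open>Sup A \<in> A\<close> unfolding r1_def .
      have ar1: "a \<le> r1" unfolding r1_def using \<open>a \<in> A\<close> bA by (rule cSup_upper)
      have r1t: "r1 \<le> t" "D r1 \<ge> 0" using r1A unfolding A_def by auto
      then have r1t': "r1 < t" using Dt by (cases "r1 = t") auto
      have r1R: "r1 \<in> {0<..<R}" using a ar1 r1t' t by auto
      have after: "D x < 0" if "r1 < x" "x \<le> t" for x
      proof (rule ccontr)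
        assume "\<not> D x < 0"
        then have "x \<in> A" unfolding A_def using that ar1 by auto
        then have "x \<le> r1" unfolding r1_def using bA by (rule cSup_upper)
        then show False using that by simp
      qed
      have Wle: "W x \<le> W r1" if "r1 < x" "x \<le> t" for x
        using that r1R t by (intro W_dec) (auto intro: less_imp_le[OF after])
      have v'le: "v' x \<le> v' r1" if "r1 < x" "x \<le> t" for x
        using that r1R t Wle[OF that] by (intro v'_W_le) auto
      have vlt: "v r1 < v x" if "r1 < x" "x \<le> t" for x
        using that r1R t by (intro v_gt) (auto intro: v'_pos)
      have flt: "f (v r1) < f (v x)" if "r1 < x" "x \<le> t" for x
        using strict_mono_onD[OF f_mono] vlt[OF that] v_pos(1)[OF r1R] by auto
      have Wdiv: "W x / x \<le> W r1 / r1" if "r1 < x" "x \<le> t" for x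
      proof -
        have "W x / x \<le> W r1 / x" using Wle[OF that] that r1R by (intro divide_right_mono) auto
        also have "\<dots> \<le> W r1 / r1" using W_pos[OF r1R] that r1R by (intro divide_left_mono) auto
        finally show ?thesis .
      qed
      from s show False
      proof
        assume s1: "s = -1"
        have "D t - D r1 = (f (v t) - f (v r1)) - (g (v' t) - g (v' r1)) + real m * (W r1 / r1 - W t / t)"
          unfolding D_def k_eq[OF t] k_eq[OF r1R] s1 by (simp add: algebra_simps)
        moreover have "g (v' t) \<le> g (v' r1)" using v'le[OF r1t' order.refl] v'_pos[OF t] by (intro g_le) auto
        moreover have "real m * (W r1 / r1 - W t / t) \<ge> 0" using Wdiv[OF r1t' order.refl] by simp
        moreover have "f (v r1) < f (v t)" by (rule flt[OF r1t' order.refl])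
        ultimately have "D t > D r1" by linarith
        then show False using Dt r1t by simp
      next
        assume s1: "s = 1"
        show False
        proof (cases "m = 0")
          case True
          have "D t = f (v t) + g (v' t)" unfolding D_def k_eq[OF t] s1 True by simp
          moreover have "f (v t) > 0" using f_pos v_pos(1)[OF t] by blast
          moreover have "g (v' t) > 0" using g_pos v'_pos[OF t] by blast
          ultimately show False using Dt by simp
        next
          case False
          have "isCont D r1" by (rule D_isCont[OF r1R])
          then have "(D \<longlongrightarrow> D r1) (at_right r1)"
            unfolding isCont_def by (rule tendsto_mono[OF at_le, rotated]) simp
          moreover have "eventually (\<lambda>x. D x \<le> 0) (at_right r1)"
            using eventually_at_right_real[OF r1t']
            by (rule eventually_mono) (auto intro: less_imp_le[OF after])
          ultimately have "D r1 \<le> 0"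
            by (rule tendsto_upperbound) (simp add: trivial_limit_at_right_real)
          then have Dr1: "D r1 = 0" using r1t by simp
          then have "E r1 = 0" unfolding E_def by simp
          then have "((\<lambda>y. (v' y - v' r1) / (y - r1)) \<longlongrightarrow> 0) (at r1)"
            using v'_der[OF r1R] unfolding has_field_derivative_iff by simp
          define \<epsilon> where "\<epsilon> = real m * W r1 / (2 * (L + 1) * r1 * R)"
          have \<epsilon>pos: "\<epsilon> > 0" unfolding \<epsilon>_def using False W_pos[OF r1R] L0 r1R R by auto
          have "eventually (\<lambda>y. dist ((v' y - v' r1) / (y - r1)) 0 < \<epsilon>) (at r1)"
            by (rule tendstoD[OF \<open>((\<lambda>y. (v' y - v' r1) / (y - r1)) \<longlongrightarrow> 0) (at r1)\<close> \<epsilon>pos])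
          then have "eventually (\<lambda>y. dist ((v' y - v' r1) / (y - r1)) 0 < \<epsilon>) (at_right r1)"
            by (rule filter_leD[OF at_le, rotated]) simp
          then have "eventually (\<lambda>y. dist ((v' y - v' r1) / (y - r1)) 0 < \<epsilon> \<and> y \<in> {r1<..<t}) (at_right r1)"
            using eventually_at_right_real[OF r1t'] by (rule eventually_conj)
          then obtain y where y: "dist ((v' y - v' r1) / (y - r1)) 0 < \<epsilon>" "y \<in> {r1<..<t}"
            using eventually_happens[of _ "at_right r1"] trivial_limit_at_right_real by blast
          have yR: "y \<in> {0<..<R}" using y r1R t by auto
          have ypos: "y - r1 > 0" using y by simp
          have dv: "\<bar>v' y - v' r1\<bar> < \<epsilon> * (y - r1)"
            using y(1) ypos by (simp add: dist_real_def abs_divide divide_less_eq)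
          define P where "P = (L + 1) * \<epsilon> * (y - r1)"
          have Ppos: "P > 0" unfolding P_def using \<epsilon>pos ypos L0 by simp
          have "dist (g (v' y)) (g (v' r1)) \<le> L * dist (v' y) (v' r1)"
            using v'_pos[OF yR] v'_pos[OF r1R] by (intro lipschitz_onD[OF L]) auto
          then have "\<bar>g (v' y) - g (v' r1)\<bar> \<le> L * \<bar>v' y - v' r1\<bar>" by (simp add: dist_real_def)
          also have "\<dots> \<le> (L + 1) * (\<epsilon> * (y - r1))"
            using dv L0 by (intro mult_mono) auto
          finally have gb: "g (v' y) - g (v' r1) \<ge> - P" unfolding P_def by (simp add: mult.assoc)
          have fb: "f (v y) - f (v r1) \<ge> 0" using flt[of y] y by auto
          have "W y / y \<le> W r1 / y" using Wle[of y] y r1R by (intro divide_right_mono) auto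
          moreover have "W r1 / r1 - W r1 / y = W r1 * (y - r1) / (r1 * y)"
            using r1R yR by (simp add: field_simps)
          moreover have "W r1 * (y - r1) / (r1 * R) \<le> W r1 * (y - r1) / (r1 * y)"
            using r1R yR W_pos[OF r1R] ypos by (intro divide_left_mono mult_left_mono) auto
          ultimately have "W r1 / r1 - W y / y \<ge> W r1 * (y - r1) / (r1 * R)" by linarith
          then have "real m * (W r1 / r1 - W y / y) \<ge> real m * (W r1 * (y - r1) / (r1 * R))"
            by (intro mult_left_mono) auto
          moreover have "real m * (W r1 * (y - r1) / (r1 * R)) = 2 * P"
          proof -
            have hL: "L + 1 \<noteq> 0" "1 + L \<noteq> 0" "r1 \<noteq> 0" "R \<noteq> 0" using L0 r1R R by auto
            have hc: "2 * (L + 1) * r1 * R \<noteq> 0" using hL by simp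
            have c: "(2 * (L + 1) * r1 * R) * \<epsilon> = real m * W r1"
              unfolding \<epsilon>_def using hc by simp
            have "2 * P = ((2 * (L + 1) * r1 * R) * \<epsilon>) * (y - r1) / (r1 * R)"
              unfolding P_def using hL by (simp add: field_simps)
            then show ?thesis unfolding c by simp
          qed
          ultimately have mb: "real m * (W r1 / r1 - W y / y) \<ge> 2 * P" by simp
          have "D y - D r1 = (f (v y) - f (v r1)) + (g (v' y) - g (v' r1)) + real m * (W r1 / r1 - W y / y)"
            unfolding D_def k_eq[OF yR] k_eq[OF r1R] s1 by (simp add: algebra_simps)
          then have "D y > 0" using fb gb mb Ppos Dr1 by linarith
          moreover have "D y < 0" using after[of y] y by auto
          ultimately show False by simp
        qed
      qed
    qed
  qed
  show ?thesis
  proof (intro ballI conjI)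
    fix r assume r: "r \<in> {0<..<R}"
    show "v r > 0" by (rule v_pos(1)[OF r])
    show "v' r > 0" by (rule v'_pos[OF r])
    have E_nonneg: "E x \<ge> 0" if "x \<in> {0<..<R}" for x
      unfolding E_def using p D_nonneg[OF that] by (intro mult_nonneg_nonneg) auto
    show "\<exists>d. (v' has_real_derivative d) (at r) \<and> d \<ge> 0"
      using v'_der[OF r] E_nonneg[OF r] by blast
    have v'_le: "v' t \<le> v' r" if t: "0 \<le> t" "t \<le> r" for t
    proof (cases "t = 0")
      case True then show ?thesis using v'0 v'_pos[OF r] by simp
    next
      case False
      show ?thesis
      proof (rule DERIV_nonneg_imp_increasing_open[of t r v'])
        show "t \<le> r" by (rule t(2))
      next
        fix x assume "t < x" "x < r"
        then have x: "x \<in> {0<..<R}" using t r by auto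
        show "\<exists>y. (v' has_real_derivative y) (at x) \<and> 0 \<le> y"
          using v'_der[OF x] E_nonneg[OF x] by blast
      next
        show "continuous_on {t..r} v'" using t r by (auto intro: continuous_on_subset[OF v'_cont])
      qed
    qed
    have "(\<lambda>x. v x - x * v' r) 0 \<ge> (\<lambda>x. v x - x * v' r) r"
    proof (rule DERIV_nonpos_imp_decreasing_open[of 0 r])
      show "0 \<le> r" using r by simp
    next
      fix x assume x: "0 < x" "x < r"
      then have xR: "x \<in> {0<..<R}" using r by auto
      have "((\<lambda>x. v x - x * v' r) has_real_derivative v' x - 1 * v' r) (at x)"
        by (intro DERIV_diff vder[OF xR] DERIV_cmult_right DERIV_ident)
      then show "\<exists>y. ((\<lambda>x. v x - x * v' r) has_real_derivative y) (at x) \<and> y \<le> 0"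
        using v'_le[of x] x by (intro exI[of _ "v' x - 1 * v' r"]) auto
    next
      show "continuous_on {0..r} (\<lambda>x. v x - x * v' r)"
        using r by (intro continuous_intros continuous_on_subset[OF v_cont]) auto
    qed
    then have "v r \<le> v0 + r * v' r" using v0 by simp
    also have "\<dots> \<le> v0 + R * v' r" using r v'_pos[OF r] by (intro add_left_mono mult_right_mono) auto
    finally show "v r \<le> v0 + R * v' r" .
  qed
qed

end
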